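(* Let $S(n)=\sum_{i=1}^{n}(-1)^{e(i)}$ for $n\ge1$. Then $$\liminf_{n\to\infty}S(n)=-\infty\qquad\text{and}\qquad\limsup_{n\to\infty}S(n)=+\infty.$$
   Context: The Stern polynomials $B_n(t)\in\mathbb{Z}[t]$ are defined by $B_0(t)=0$, $B_1(t)=1$, and for $n\geq 1$: $B_{2n}(t)=tB_n(t)$, $B_{2n+1}(t)=B_n(t)+B_{n+1}(t)$. For $n\geq1$ let $e(n)=\deg B_n(t)$. *)

theory Defs
  imports "HOL-Computational_Algebra.Polynomial" "HOL-Library.Extended_Real" "HOL-Library.Liminf_Limsup"
begin

function stern_poly :: "nat \<Rightarrow> int poly" where
  "stern_poly n =
     (if n = 0 then 0
      else if n = 1 then 1
      else if even n then monom 1 1 * stern_poly (n div 2)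
      else stern_poly (n div 2) + stern_poly (n div 2 + 1))"
  by pat_completeness auto
termination
  by (relation "measure id") (auto, presburger)

definition stern_e :: "nat \<Rightarrow> nat" where
  "stern_e n = degree (stern_poly n)"

definition stern_S :: "nat \<Rightarrow> int" where
  "stern_S n = (\<Sum>i=1..n. (-1) ^ stern_e i)"

end

theory Submission
  imports Defs
begin

lemma sp0: "stern_poly 0 = 0" by (subst stern_poly.simps) simp
lemma sp1: "stern_poly 1 = 1" by (subst stern_poly.simps) simp
lemma sp1': "stern_poly (Suc 0) = 1" using sp1 by simp
lemma sp_even: "n \<ge> 1 \<Longrightarrow> stern_poly (2*n) = monom 1 1 * stern_poly n"
  by (subst stern_poly.simps) simp
lemma sp_odd: "n \<ge> 1 \<Longrightarrow> stern_poly (2*n+1) = stern_poly n + stern_poly (n+1)"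
  by (subst stern_poly.simps) simp

declare stern_poly.simps[simp del]

lemma sp_props: "(\<forall>i. coeff (stern_poly n) i \<ge> 0) \<and> (n \<ge> 1 \<longrightarrow> stern_poly n \<noteq> 0)"
proof (induction n rule: less_induct)
  case (less n)
  show ?case
  proof (cases "n \<le> 1")
    case True
    then have "n = 0 \<or> n = 1" by auto
    then show ?thesis by (auto simp: sp0 sp1 sp1')
  next
    case False
    obtain m where m: "n = 2*m \<or> n = 2*m+1" by (metis oddE evenE)
    have m1: "m \<ge> 1" using False m by auto
    show ?thesis
    proof (cases "n = 2*m")
      case True
      have IH: "(\<forall>i. coeff (stern_poly m) i \<ge> 0) \<and> stern_poly m \<noteq> 0"
        using less.IH[of m] True m1 by auto
      have "coeff (stern_poly n) i \<ge> 0" for i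
        using IH True m1 by (cases i) (auto simp: sp_even coeff_monom_mult)
      moreover have "stern_poly n \<noteq> 0" using IH True m1
        by (auto simp: sp_even monom_eq_0_iff)
      ultimately show ?thesis by auto
    next
      case False
      then have n: "n = 2*m+1" using m by auto
      have IH: "(\<forall>i. coeff (stern_poly m) i \<ge> 0) \<and> stern_poly m \<noteq> 0"
        using less.IH[of m] n m1 by auto
      have IH2: "(\<forall>i. coeff (stern_poly (m+1)) i \<ge> 0) \<and> stern_poly (m+1) \<noteq> 0"
        using less.IH[of "m+1"] n m1 by auto
      have spn: "stern_poly n = stern_poly m + stern_poly (m+1)" using sp_odd[OF m1] n by simp
      have "coeff (stern_poly n) i \<ge> 0" for i
        using IH IH2 unfolding spn by simp
      moreover have "stern_poly n \<noteq> 0"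
      proof
        assume "stern_poly n = 0"
        then have "coeff (stern_poly m) (degree (stern_poly m)) + coeff (stern_poly (m+1)) (degree (stern_poly m)) = 0"
          using n m1 by (metis coeff_add coeff_0 sp_odd)
        moreover have "coeff (stern_poly m) (degree (stern_poly m)) > 0"
          using IH by (metis leading_coeff_0_iff order_le_less)
        ultimately show False using IH2 by (metis add_pos_nonneg less_irrefl)
      qed
      ultimately show ?thesis by auto
    qed
  qed
qed

lemma deg_add_nonneg:
  fixes p q :: "int poly"
  assumes "\<forall>i. coeff p i \<ge> 0" "\<forall>i. coeff q i \<ge> 0" "p \<noteq> 0" "q \<noteq> 0"
  shows "degree (p + q) = max (degree p) (degree q)"
proof (rule antisym)
  show "degree (p + q) \<le> max (degree p) (degree q)" by (rule degree_add_le_max)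
  have "coeff p (degree p) > 0" using assms(1,3) by (metis leading_coeff_0_iff order_le_less)
  then have "coeff (p+q) (degree p) > 0"
    using assms(2) by (simp add: add_pos_nonneg)
  then have a: "degree p \<le> degree (p+q)" by (metis le_degree less_irrefl)
  have "coeff q (degree q) > 0" using assms(2,4) by (metis leading_coeff_0_iff order_le_less)
  then have "coeff (p+q) (degree q) > 0"
    using assms(1) by (simp add: add_nonneg_pos)
  then have "degree q \<le> degree (p+q)" by (metis le_degree less_irrefl)
  with a show "max (degree p) (degree q) \<le> degree (p + q)" by simp
qed

lemma e0: "stern_e 0 = 0" by (simp add: stern_e_def sp0)
lemma e1: "stern_e 1 = 0" by (simp add: stern_e_def sp1')
lemma e1': "stern_e (Suc 0) = 0" by (simp add: stern_e_def sp1')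
lemma e_even: "n \<ge> 1 \<Longrightarrow> stern_e (2*n) = stern_e n + 1"
  using sp_props[of n]
  by (simp add: stern_e_def sp_even degree_mult_eq degree_monom_eq)
lemma e_odd: "n \<ge> 1 \<Longrightarrow> stern_e (2*n+1) = max (stern_e n) (stern_e (n+1))"
  using sp_props[of n] sp_props[of "n+1"]
  unfolding stern_e_def using sp_odd deg_add_nonneg by simp


lemma e_step: "\<bar>int (stern_e (n+1)) - int (stern_e n)\<bar> \<le> 1"
proof (induction n rule: less_induct)
  case (less n)
  show ?case
  proof (cases "n = 0")
    case True then show ?thesis by (simp add: e0 e1')
  next
    case False
    obtain m where m: "n = 2*m \<or> n = 2*m+1" by (metis oddE evenE)
    show ?thesis
    proof (cases "n = 2*m")
      case True
      then have m1: "m \<ge> 1" using False by auto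
      have IH: "\<bar>int (stern_e (m+1)) - int (stern_e m)\<bar> \<le> 1" using less.IH[of m] True m1 by auto
      have "stern_e (n+1) = max (stern_e m) (stern_e (m+1))" using e_odd[OF m1] True by simp
      moreover have "stern_e n = stern_e m + 1" using e_even[OF m1] True by simp
      ultimately show ?thesis using IH by auto
    next
      case F2: False
      then have n: "n = 2*m+1" using m by auto
      show ?thesis
      proof (cases "m = 0")
        case True
        have "stern_e (2*1) = stern_e 1 + 1" by (rule e_even) simp
        then have "stern_e 2 = 1" using e1 by simp
        moreover have "n + 1 = 2" "n = 1" using n True by auto
        ultimately show ?thesis using e1 by (simp only:)
      next
        case False
        then have m1: "m \<ge> 1" by simp
        have IH: "\<bar>int (stern_e (m+1)) - int (stern_e m)\<bar> \<le> 1" using less.IH[of m] n by auto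
        have "stern_e n = max (stern_e m) (stern_e (m+1))" using e_odd[OF m1] n by simp
        moreover have "stern_e (n+1) = stern_e (m+1) + 1" using e_even[of "m+1"] n by (simp add: algebra_simps)
        ultimately show ?thesis using IH by auto
      qed
    qed
  qed
qed

lemma e_41: "n \<ge> 1 \<Longrightarrow> stern_e (4*n+1) = stern_e n + 1"
proof -
  assume n: "n \<ge> 1"
  have "stern_e (4*n+1) = max (stern_e (2*n)) (stern_e (2*n+1))"
    using e_odd[of "2*n"] n by (simp add: mult.assoc)
  also have "\<dots> = max (stern_e n + 1) (max (stern_e n) (stern_e (n+1)))"
    using e_even[OF n] e_odd[OF n] by simp
  also have "\<dots> = stern_e n + 1" using e_step[of n] by auto
  finally show ?thesis .
qed

lemma e_43: "stern_e (4*n+3) = stern_e (n+1) + 1"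
proof -
  have "stern_e (4*n+3) = stern_e (2*(2*n+1)+1)" by (rule arg_cong[where f=stern_e]) simp
  also have "\<dots> = max (stern_e (2*n+1)) (stern_e (2*n+1+1))" by (rule e_odd) simp
  also have "2*n+1+1 = 2*n+2" by simp
  finally have a: "stern_e (4*n+3) = max (stern_e (2*n+1)) (stern_e (2*n+2))" .
  have "stern_e (2*n+2) = stern_e (2*(n+1))" by (rule arg_cong[where f=stern_e]) simp
  also have "\<dots> = stern_e (n+1) + 1" by (rule e_even) simp
  finally have b: "stern_e (2*n+2) = stern_e (n+1) + 1" .
  have c: "stern_e (2*n+1) \<le> stern_e (n+1) + 1"
  proof (cases "n = 0")
    case True then show ?thesis by (simp add: e1)
  next
    case False
    then have "stern_e (2*n+1) = max (stern_e n) (stern_e (n+1))" using e_odd by simp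
    then show ?thesis using e_step[of n] by auto
  qed
  show ?thesis using a b c by simp
qed

lemma e_pow2: "stern_e (2^k) = k"
proof (induction k)
  case 0 then show ?case by (simp add: e1')
next
  case (Suc k)
  have "(1::nat) \<le> 2^k" by simp
  then show ?case using e_even[of "2^k"] Suc by simp
qed

definition f :: "nat \<Rightarrow> int" where "f n = (-1) ^ stern_e n"

lemma f_even: "n \<ge> 1 \<Longrightarrow> f (2*n) = - f n"
proof -
  assume "n \<ge> 1" then have "stern_e (2*n) = stern_e n + 1" by (rule e_even)
  then show ?thesis unfolding f_def by simp
qed
lemma f_41: "n \<ge> 1 \<Longrightarrow> f (4*n+1) = - f n"
proof -
  assume "n \<ge> 1" then have "stern_e (4*n+1) = stern_e n + 1" by (rule e_41)
  then show ?thesis unfolding f_def by simp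
qed
lemma f_43: "f (4*n+3) = - f (n+1)"
proof -
  have "stern_e (4*n+3) = stern_e (n+1) + 1" by (rule e_43)
  then show ?thesis unfolding f_def by simp
qed

lemma S0: "stern_S 0 = 0" by (simp add: stern_S_def)
lemma S_Suc: "stern_S (Suc n) = stern_S n + f (Suc n)"
  by (simp add: stern_S_def f_def)

lemma S1: "stern_S (m+1) = stern_S m + f (m+1)"
  using S_Suc[of m] by simp
lemma S2: "stern_S (m+2) = stern_S m + f(m+1)+f(m+2)"
  using S_Suc[of m] S_Suc[of "m+1"] by (simp add: numeral_eq_Suc)
lemma S4: "stern_S (m+4) = stern_S m + f(m+1)+f(m+2)+f(m+3)+f(m+4)"
  using S_Suc[of m] S_Suc[of "m+1"] S_Suc[of "m+2"] S_Suc[of "m+3"] by (simp add: numeral_eq_Suc)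

lemma S_rec: "stern_S (4*(k+1)) = - stern_S (2*(k+1)) - stern_S (k+1) - stern_S k + 1"
proof (induction k)
  case 0
  have e2: "stern_e 2 = 1" using e_even[of 1] e1 by simp
  have e3: "stern_e 3 = 1" using e_43[of 0] e1 by simp
  have e4: "stern_e 4 = 2" using e_even[of 2] e2 by simp
  have "stern_S 4 = 0" using S_Suc[of 3] S_Suc[of 2] S_Suc[of 1] S_Suc[of 0] S0 e1 e2 e3 e4
    by (simp add: f_def numeral_eq_Suc)
  moreover have "stern_S 2 = 0" using S_Suc[of 1] S_Suc[of 0] S0 e1 e2
    by (simp add: f_def numeral_eq_Suc)
  moreover have "stern_S 1 = 1" using S_Suc[of 0] S0 e1 by (simp add: f_def)
  ultimately show ?case using S0 by simp
next
  case (Suc k)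
  have A: "stern_S (4*(k+1)+4) = stern_S (4*(k+1)) + f (4*(k+1)+1) + f (4*(k+1)+2) + f (4*(k+1)+3) + f (4*(k+1)+4)"
    by (rule S4)
  have B: "stern_S (2*(k+1)+2) = stern_S (2*(k+1)) + f (2*(k+1)+1) + f (2*(k+1)+2)"
    by (rule S2)
  have C: "stern_S (k+1+1) = stern_S (k+1) + f (k+1+1)"
    by (rule S1)
  have f5: "f (4*(k+1)+1) = - f (k+1)" by (rule f_41) simp
  have f6: "f (2*(2*(k+1)+1)) = - f (2*(k+1)+1)" by (rule f_even) simp
  have f7: "f (4*(k+1)+3) = - f (k+1+1)" by (rule f_43)
  have f8: "f (2*(2*(k+1)+2)) = - f (2*(k+1)+2)" by (rule f_even) simp
  have e6: "2*(2*(k+1)+1) = 4*(k+1)+2" "2*(2*(k+1)+2) = 4*(k+1)+4" by simp_all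
  have D: "stern_S (k+1) = stern_S k + f (k+1)" by (rule S1)
  have E0: "Suc k = k+1" by simp
  have E: "4*(k+1+1) = 4*(k+1)+4" "2*(k+1+1) = 2*(k+1)+2" by simp_all
  show ?case unfolding E0 E using A B C D f5 f6 f7 f8 Suc.IH unfolding e6 by linarith
qed


lemma f_pow2: "f (2^k) = (-1)^k" by (simp add: f_def e_pow2)

lemma a_rec: "stern_S (2^(k+2)) = - stern_S (2^(k+1)) - 2*stern_S (2^k) + (-1)^k + 1"
proof -
  define j where "j = 2^k - (1::nat)"
  have j1: "j + 1 = 2^k" unfolding j_def by simp
  have A: "stern_S (4*2^k) = - stern_S (2*2^k) - stern_S (2^k) - stern_S j + 1"
    using S_rec[of j] unfolding j1 .
  have B: "stern_S (2^k) = stern_S j + (-1)^k" using S1[of j] unfolding j1 f_pow2 .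
  have C: "(4::nat)*2^k = 2^(k+2)" "(2::nat)*2^k = 2^(k+1)" by (simp_all add: power_add)
  show ?thesis using A B unfolding C by linarith
qed

definition b :: "nat \<Rightarrow> int" where "b k = 4 * stern_S (2^k) - 1 - 2*(-1)^k"

lemma b_rec: "b (k+2) = - b (k+1) - 2 * b k"
  unfolding b_def using a_rec[of k] by simp

lemma b0: "b 0 = 1"
  unfolding b_def using S1[of 0] S0 e1 by (simp add: f_def)
lemma b1: "b 1 = 1"
proof -
  have f2: "f (2*1) = - f 1" by (rule f_even) simp
  have f1: "f 1 = 1" by (simp add: f_def e1')
  have "stern_S (0+2) = stern_S 0 + f (0+1) + f (0+2)" by (rule S2)
  then have "stern_S 2 = stern_S 0 + f 1 + f 2" by (simp only: add_0)
  then have "stern_S 2 = 0" using f2 f1 S0 by (simp only: mult_1_right)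
  then show ?thesis unfolding b_def by simp
qed


lemma Q_val: "b (k+1)^2 + b (k+1) * b k + 2 * (b k)^2 = 2^(k+2)"
proof (induction k)
  case 0 then show ?case using b0 b1 by simp
next
  case (Suc k)
  have br: "b (Suc k + 1) = - b (k+1) - 2 * b k" using b_rec[of k] by (simp add: numeral_eq_Suc)
  have sk: "b (Suc k) = b (k+1)" by simp
  have alg: "(-y-2*x)^2 + (-y-2*x)*y + 2*y^2 = 2*(y^2+y*x+2*x^2)" for x y :: int
    by (simp add: power2_eq_square algebra_simps)
  have "b (Suc k+1)^2 + b (Suc k+1) * b (Suc k) + 2 * (b (Suc k))^2
     = 2 * (b (k+1)^2 + b (k+1) * b k + 2 * (b k)^2)"
    unfolding br sk by (rule alg)
  then show ?case using Suc.IH by (simp add: power_add)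
qed


lemma key_ineq:
  fixes x y m :: int
  assumes "x > -m" "y > -m" "-y-2*x > -m"
  shows "y^2 + y*x + 2*x^2 < 14*m^2"
proof -
  have m: "m > 0" using assms by linarith
  have ax: "\<bar>x\<bar> < m" using assms by linarith
  have ay: "\<bar>y\<bar> < 3*m" using assms by linarith
  have "y^2 = \<bar>y\<bar>^2" by simp
  also have "\<dots> < (3*m)^2" using ay by (intro power_strict_mono) auto
  finally have 1: "y^2 < 9*m^2" by (simp add: power_mult_distrib)
  have "x^2 = \<bar>x\<bar>^2" by simp
  also have "\<dots> < m^2" using ax by (intro power_strict_mono) auto
  finally have 2: "x^2 < m^2" .
  have "\<bar>y*x\<bar> = \<bar>y\<bar>*\<bar>x\<bar>" by (simp add: abs_mult)
  also have "\<dots> \<le> 3*m*m" using ax ay by (intro mult_mono) auto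
  finally have 3: "y*x \<le> 3*m^2" by (simp add: power2_eq_square)
  show ?thesis using 1 2 3 by linarith
qed

lemma big_k: "\<exists>k\<ge>N. (14::int)*M^2 \<le> 2^(k+2)"
proof -
  define k where "k = N + nat (14*M^2)"
  have "k < 2^k" by (rule less_exp)
  also have "(2::nat)^k \<le> 2^(k+2)" by (intro power_increasing) auto
  finally have "int k < int (2^(k+2))" by (simp only: of_nat_less_iff)
  then have "int k < 2^(k+2)" by simp
  moreover have "14*M^2 \<le> int k" unfolding k_def by simp
  ultimately have "14*M^2 \<le> 2^(k+2)" by linarith
  moreover have "k \<ge> N" unfolding k_def by simp
  ultimately show ?thesis by blast
qed


lemma exists_low: "M \<ge> 1 \<Longrightarrow> \<exists>n\<ge>N. 4 * stern_S n \<le> 3 - M"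
proof -
  assume M: "M \<ge> 1"
  obtain k where k: "k \<ge> N" "14*M^2 \<le> 2^(k+2)" using big_k by blast
  have Q: "b (k+1)^2 + b (k+1) * b k + 2 * (b k)^2 = 2^(k+2)" by (rule Q_val)
  have "\<exists>j\<ge>k. b j \<le> -M"
  proof (rule ccontr)
    assume "\<not> ?thesis"
    then have A: "\<forall>j\<ge>k. b j > -M" using not_le by (metis (no_types) not_le)
    have h: "b k > -M" "b (k+1) > -M" "b (k+2) > -M"
      using A[rule_format, of k] A[rule_format, of "k+1"] A[rule_format, of "k+2"] by simp_all
    have "- b (k+1) - 2 * b k > -M" using h(3) b_rec[of k] by linarith
    then have "b (k+1)^2 + b (k+1) * b k + 2 * (b k)^2 < 14*M^2"
      using h by (intro key_ineq)
    then show False using Q k by linarith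
  qed
  then obtain j where j: "j \<ge> k" "b j \<le> -M" by blast
  have "j < 2^j" by (rule less_exp)
  then have "2^j \<ge> N" using j k by linarith
  moreover have "4 * stern_S (2^j) \<le> 3 - M"
    using j(2) unfolding b_def by (cases "even j") auto
  ultimately show ?thesis by blast
qed

lemma exists_high: "M \<ge> 1 \<Longrightarrow> \<exists>n\<ge>N. 4 * stern_S n \<ge> M - 3"
proof -
  assume M: "M \<ge> 1"
  obtain k where k: "k \<ge> N" "14*M^2 \<le> 2^(k+2)" using big_k by blast
  have Q: "b (k+1)^2 + b (k+1) * b k + 2 * (b k)^2 = 2^(k+2)" by (rule Q_val)
  have "\<exists>j\<ge>k. b j \<ge> M"
  proof (rule ccontr)
    assume "\<not> ?thesis"
    then have A: "\<forall>j\<ge>k. b j < M" using not_le by (metis (no_types) not_le)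
    have h: "b k < M" "b (k+1) < M" "b (k+2) < M"
      using A[rule_format, of k] A[rule_format, of "k+1"] A[rule_format, of "k+2"] by simp_all
    have h2: "- (- b (k+1)) - 2 * (- b k) > -M" using h(3) b_rec[of k] by linarith
    have "(- b (k+1))^2 + (- b (k+1)) * (- b k) + 2 * (- b k)^2 < 14*M^2"
      using h h2 by (intro key_ineq) auto
    then show False using Q k by simp
  qed
  then obtain j where j: "j \<ge> k" "b j \<ge> M" by blast
  have "j < 2^j" by (rule less_exp)
  then have "2^j \<ge> N" using j k by linarith
  moreover have "4 * stern_S (2^j) \<ge> M - 3"
    using j(2) unfolding b_def by (cases "even j") auto
  ultimately show ?thesis by blast
qed



lemma low_real: "\<exists>n\<ge>N. real_of_int (stern_S n) \<le> B"
proof -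
  define M where "M = \<lceil>4*\<bar>B\<bar>\<rceil> + 4"
  have "\<lceil>4*\<bar>B\<bar>\<rceil> \<ge> 0" by simp
  then have M1: "M \<ge> 1" unfolding M_def by linarith
  obtain n where n: "n \<ge> N" "4 * stern_S n \<le> 3 - M" using exists_low[OF M1] by blast
  have "real_of_int M \<ge> 4*\<bar>B\<bar> + 4" unfolding M_def by linarith
  moreover have "4 * real_of_int (stern_S n) \<le> 3 - real_of_int M" using n(2)
    by (metis of_int_diff of_int_le_iff of_int_mult of_int_numeral)
  ultimately have "4 * real_of_int (stern_S n) \<le> 3 - 4*\<bar>B\<bar> - 4" by linarith
  then have "real_of_int (stern_S n) \<le> B" by linarith
  then show ?thesis using n(1) by blast
qed

lemma high_real: "\<exists>n\<ge>N. real_of_int (stern_S n) \<ge> B"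
proof -
  define M where "M = \<lceil>4*\<bar>B\<bar>\<rceil> + 4"
  have "\<lceil>4*\<bar>B\<bar>\<rceil> \<ge> 0" by simp
  then have M1: "M \<ge> 1" unfolding M_def by linarith
  obtain n where n: "n \<ge> N" "4 * stern_S n \<ge> M - 3" using exists_high[OF M1] by blast
  have "real_of_int M \<ge> 4*\<bar>B\<bar> + 4" unfolding M_def by linarith
  moreover have "4 * real_of_int (stern_S n) \<ge> real_of_int M - 3" using n(2)
    by (metis of_int_diff of_int_le_iff of_int_mult of_int_numeral)
  ultimately have "4 * real_of_int (stern_S n) \<ge> 4*\<bar>B\<bar> + 4 - 3" by linarith
  then have "real_of_int (stern_S n) \<ge> B" by linarith
  then show ?thesis using n(1) by blast
qed

theorem mainTheorem16:
  shows "liminf (\<lambda>n. ereal (real_of_int (stern_S n))) = -\<infinity>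
       \<and> limsup (\<lambda>n. ereal (real_of_int (stern_S n))) = \<infinity>"
proof
  show "liminf (\<lambda>n. ereal (real_of_int (stern_S n))) = -\<infinity>"
  proof (rule ereal_bot)
    fix B
    show "liminf (\<lambda>n. ereal (real_of_int (stern_S n))) \<le> ereal B"
    proof (rule Liminf_least)
      fix P assume "eventually P sequentially"
      then obtain N where N: "\<And>n. n \<ge> N \<Longrightarrow> P n" by (auto simp: eventually_sequentially)
      obtain n where n: "n \<ge> N" "real_of_int (stern_S n) \<le> B" using low_real by blast
      have "(INF x\<in>Collect P. ereal (real_of_int (stern_S x))) \<le> ereal (real_of_int (stern_S n))"
        using N n(1) by (intro INF_lower) auto
      also have "\<dots> \<le> ereal B" using n(2) by simp
      finally show "(INF x\<in>Collect P. ereal (real_of_int (stern_S x))) \<le> ereal B" .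
    qed
  qed
  show "limsup (\<lambda>n. ereal (real_of_int (stern_S n))) = \<infinity>"
  proof (rule ereal_top)
    fix B
    show "limsup (\<lambda>n. ereal (real_of_int (stern_S n))) \<ge> ereal B"
    proof (rule Limsup_greatest)
      fix P assume "eventually P sequentially"
      then obtain N where N: "\<And>n. n \<ge> N \<Longrightarrow> P n" by (auto simp: eventually_sequentially)
      obtain n where n: "n \<ge> N" "real_of_int (stern_S n) \<ge> B" using high_real by blast
      have "ereal B \<le> ereal (real_of_int (stern_S n))" using n(2) by simp
      also have "\<dots> \<le> (SUP x\<in>Collect P. ereal (real_of_int (stern_S x)))"
        using N n(1) by (intro SUP_upper) auto
      finally show "ereal B \<le> (SUP x\<in>Collect P. ereal (real_of_int (stern_S x)))" .
    qed
  qed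
qed

end
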